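(* Let $\alpha\ge-1$. For $g\in\mathcal{H}(\mathbb{D})$ and $0<r<1$ let $g_r(z)=g(rz)$. Then (i) $N_{\alpha,q}(g)\le\liminf_{r\to1}N_{\alpha,q}(g_r)$ for all $g\in\mathcal{H}(\mathbb{D})$ and $q>0$; (ii) for each $q\ge1$ there is a constant $C>0$ independent of $g$ such that $\sup_{0<r<1}N_{\alpha,q}(g_r)\le C\,N_{\alpha,q}(g)$ for all $g\in\mathcal{H}(\mathbb{D})$.
   Context: $\mathbb{D}$ unit disc, $\mathcal{H}(\mathbb{D})$ analytic functions, $dA$ normalized area measure, $\phi_a(z)=\frac{a-z}{1-\bar az}$. For $\psi:\mathbb{D}\to\mathbb{R}$, $|\nabla\psi|(z)=\limsup_{w\to z}|\psi(w)-\psi(z)|/|w-z|$. For $\alpha\ge-1$, $q>0$: $N_{\alpha,q}(g)^{2q}=\sup_{a\in\mathbb{D}}\int_{\mathbb{D}}(1-|\phi_a|^2)^{\alpha+2}|\nabla|g|^q|^2\,dA\in[0,\infty]$. *)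

theory Defs
  imports "HOL-Analysis.Analysis"
begin

definition disc_auto :: "complex \<Rightarrow> complex \<Rightarrow> complex" where
  "disc_auto a z = (a - z) / (1 - cnj a * z)"

definition grad_norm :: "(complex \<Rightarrow> real) \<Rightarrow> complex \<Rightarrow> ennreal" where
  "grad_norm \<psi> z = Limsup (at z) (\<lambda>w. ennreal (\<bar>\<psi> w - \<psi> z\<bar> / cmod (w - z)))"

definition ennreal_powr :: "ennreal \<Rightarrow> real \<Rightarrow> ennreal" where
  "ennreal_powr x p = (if x = top then top else ennreal (enn2real x powr p))"

text \<open>N_{alpha,q}(g)^{2q} = sup_{a in D} int_D (1-|phi_a|^2)^{alpha+2} |nabla |g|^q|^2 dA,
  with dA = (1/pi) * Lebesgue area measure.\<close>
definition N_pow :: "real \<Rightarrow> real \<Rightarrow> (complex \<Rightarrow> complex) \<Rightarrow> ennreal" where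
  "N_pow \<alpha> q g = (SUP a\<in>ball 0 1.
      \<integral>\<^sup>+ z. ennreal (1 / pi) * indicator (ball 0 1) z
          * ennreal ((1 - (cmod (disc_auto a z))\<^sup>2) powr (\<alpha> + 2))
          * (grad_norm (\<lambda>w. cmod (g w) powr q) z)\<^sup>2 \<partial>lborel)"

definition N_norm :: "real \<Rightarrow> real \<Rightarrow> (complex \<Rightarrow> complex) \<Rightarrow> ennreal" where
  "N_norm \<alpha> q g = ennreal_powr (N_pow \<alpha> q g) (1 / (2 * q))"

end

theory Submission
  imports Defs "HOL-Complex_Analysis.Riemann_Mapping"
begin

lemma disc_auto_norm_lt1:
  assumes "cmod a < 1" "cmod z < 1"
  shows "cmod (disc_auto a z) < 1"
proof -
  have "disc_auto a z = - Moebius_function 0 a z"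
    by (simp add: disc_auto_def Moebius_function_simple minus_divide_left)
  then show ?thesis using Moebius_function_norm_lt_1[OF assms, of 0] by simp
qed

lemma schwarz_pick_dil:
  assumes "cmod a < 1" "cmod z < 1" "0 < r" "r \<le> 1"
  shows "cmod (disc_auto (of_real r * a) (of_real r * z)) \<le> cmod (disc_auto a z)"
proof -
  define u where "u = cnj a * z"
  have u1: "cmod u < 1" using assms unfolding u_def
    by (metis complex_mod_cnj mult_strict_mono' norm_ge_zero norm_mult mult_1_right)
  have key: "r * cmod (1 - u) \<le> cmod (1 - of_real (r^2) * u)"
  proof -
    obtain x y where xy: "u = Complex x y" by (cases u)
    have h: "x^2 + y^2 < 1" using u1 xy by (simp add: cmod_def power2_eq_square) 
    have "(r * cmod (1 - u))^2 \<le> (cmod (1 - of_real (r^2) * u))^2"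
    proof -
      have "(r * cmod (1 - u))^2 = r^2 * ((1-x)^2 + y^2)"
        by (simp add: xy cmod_def power_mult_distrib)
      moreover have "(cmod (1 - of_real (r^2) * u))^2 = (1 - r^2*x)^2 + (r^2*y)^2"
        by (simp add: xy cmod_def)
      moreover have "r^2 * ((1-x)^2 + y^2) \<le> (1 - r^2*x)^2 + (r^2*y)^2"
      proof -
        have "r^2 \<le> 1" using assms by (simp add: power_le_one)
        have "0 \<le> (1 - r^2) * (1 - r^2 * (x^2+y^2))"
          using \<open>r^2 \<le> 1\<close> h assms
          by (intro mult_nonneg_nonneg) (auto simp: mult_le_one)
        then show ?thesis by (simp add: algebra_simps power2_eq_square)
      qed
      ultimately show ?thesis by simp
    qed
    then show ?thesis using assms by (simp add: power2_le_iff_abs_le)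
  qed
  have d0: "1 - u \<noteq> 0" using u1 by auto
  have "disc_auto (of_real r * a) (of_real r * z) = of_real r * (a - z) / (1 - of_real (r^2) * u)"
    by (simp add: disc_auto_def u_def algebra_simps power2_eq_square)
  then have "cmod (disc_auto (of_real r * a) (of_real r * z)) = r * cmod (a - z) / cmod (1 - of_real (r^2) * u)"
    using assms by (simp add: norm_divide norm_mult)
  also have "\<dots> \<le> r * cmod (a - z) / (r * cmod (1 - u))"
  proof (rule divide_left_mono)
    have "0 < r * cmod (1 - u)" using d0 assms by simp
    then show "0 < cmod (1 - of_real (r^2) * u) * (r * cmod (1 - u))"
    proof -
      have "0 < cmod (1 - of_real (r^2) * u)" using key \<open>0 < r * cmod (1 - u)\<close> by linarith
      then show ?thesis using \<open>0 < r * cmod (1 - u)\<close> by (rule mult_pos_pos)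
    qed
  qed (use key assms in auto)
  also have "\<dots> = cmod (disc_auto a z)"
    using assms by (simp add: disc_auto_def u_def norm_divide)
  finally show ?thesis .
qed

lemma filtermap_scale_at:
  assumes "(c::real) \<noteq> 0"
  shows "filtermap (\<lambda>w::complex. of_real c * w) (at z) = at (of_real c * z)"
proof -
  have b: "bij (\<lambda>w::complex. of_real c * w)"
  proof (rule bij_betwI')
    fix y :: complex show "\<exists>x\<in>UNIV. y = of_real c * x"
      by (rule bexI[of _ "of_real (1/c) * y"]) (use assms in auto)
  qed (use assms in auto)
  have "filtermap (\<lambda>w::complex. of_real c * w) (at z within UNIV) = at (of_real c * z) within range (\<lambda>w::complex. of_real c * w)"
  proof (rule filtermap_linear_at_within[OF b])
    show "isCont (\<lambda>w::complex. of_real c * w) z" by (intro continuous_intros)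
    fix S :: "complex set" assume "open S"
    then have "open ((\<lambda>x. c *\<^sub>R x) ` S)" using assms by (rule open_scaling[rotated])
    then show "open ((\<lambda>w::complex. of_real c * w) ` S)" by (simp add: scaleR_conv_of_real)
  qed
  then show ?thesis using b by (simp add: bij_def)
qed

lemma grad_norm_scale:
  assumes "0 < r"
  shows "grad_norm (\<lambda>w. \<psi> (of_real r * w)) z = ennreal r * grad_norm \<psi> (of_real r * z)"
proof -
  let ?c = "of_real r :: complex"
  define Y where "Y u = ennreal (\<bar>\<psi> u - \<psi> (?c*z)\<bar> / cmod (u - ?c*z))" for u
  have eq: "(\<lambda>w. ennreal (\<bar>\<psi> (?c*w) - \<psi> (?c*z)\<bar> / cmod (w - z))) = (\<lambda>w. ennreal r * Y (?c * w))"
  proof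
    fix w
    have "cmod (?c*w - ?c*z) = r * cmod (w - z)"
      using assms by (simp add: right_diff_distrib[symmetric] norm_mult)
    then show "ennreal (\<bar>\<psi> (?c*w) - \<psi> (?c*z)\<bar> / cmod (w - z)) = ennreal r * Y (?c * w)"
      using assms by (simp add: Y_def ennreal_mult'[symmetric])
  qed
  have "grad_norm (\<lambda>w. \<psi> (?c * w)) z = Limsup (at z) (\<lambda>w. ennreal r * Y (?c * w))"
    unfolding grad_norm_def eq ..
  also have "\<dots> = ennreal r * Limsup (at z) (\<lambda>w. Y (?c * w))"
    by (rule Limsup_compose_continuous_mono)
       (auto intro!: ennreal_continuous_on_cmult continuous_on_id simp: mono_def mult_left_mono)
  also have "Limsup (at z) (\<lambda>w. Y (?c * w)) = Limsup (filtermap (\<lambda>w. ?c * w) (at z)) Y"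
    by (rule Limsup_filtermap_eq[symmetric]) (use assms in \<open>auto simp: inj_def\<close>)
  also have "\<dots> = Limsup (at (?c * z)) Y"
    using assms by (simp add: filtermap_scale_at)
  finally show ?thesis by (simp add: grad_norm_def Y_def[abs_def])
qed

lemma nn_integral_scale_complex:
  fixes f :: "complex \<Rightarrow> ennreal"
  assumes [measurable]: "f \<in> borel_measurable borel" and r: "0 < r"
  shows "(\<integral>\<^sup>+x. f x \<partial>lborel) = (\<integral>\<^sup>+x. ennreal (r^2) * f (of_real r * x) \<partial>lborel)"
proof -
  have "(\<integral>\<^sup>+x. f x \<partial>lborel) = (\<integral>\<^sup>+x. f x \<partial>(density (distr lborel borel (\<lambda>x. 0 + r *\<^sub>R x)) (\<lambda>_. ennreal (\<bar>r\<bar>^DIM(complex)))))"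
    using lborel_affine[of r "0::complex"] r by simp
  also have "\<dots> = (\<integral>\<^sup>+x. ennreal (r^2) * f (of_real r * x) \<partial>lborel)"
    using r by (simp add: nn_integral_density nn_integral_distr scaleR_conv_of_real)
  finally show ?thesis .
qed

lemma grad_norm_measurable:
  fixes \<psi> :: "complex \<Rightarrow> real"
  assumes S: "open S" and c: "continuous_on S \<psi>"
  obtains H where "H \<in> borel_measurable borel" "\<And>z. z \<in> S \<Longrightarrow> grad_norm \<psi> z = H z"
proof -
  obtain D :: "complex set" where D: "countable D" "\<And>X. open X \<Longrightarrow> X \<noteq> {} \<Longrightarrow> \<exists>d\<in>D. d \<in> X"
    using countable_dense_exists by blast
  define \<psi>' where "\<psi>' z = indicator S z *\<^sub>R \<psi> z" for z
  have m\<psi>[measurable]: "\<psi>' \<in> borel_measurable borel"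
    unfolding \<psi>'_def[abs_def] using S c
    by (intro borel_measurable_continuous_on_indicator) auto
  define T where "T n d z = (if d \<in> ball z (1 / real (Suc n)) \<and> d \<noteq> z
      then ennreal (\<bar>\<psi>' d - \<psi>' z\<bar> / cmod (d - z)) else 0)" for n d z
  define H where "H z = (INF n. SUP d\<in>D. T n d z)" for z
  have mT: "(\<lambda>z. T n d z) \<in> borel_measurable borel" for n d
    unfolding T_def mem_ball by measurable
  have "H \<in> borel_measurable borel"
    unfolding H_def using D(1) mT by measurable
  moreover have "grad_norm \<psi> z = H z" if zS: "z \<in> S" for z
  proof -
    obtain e0 where e0: "e0 > 0" "ball z e0 \<subseteq> S" using S zS open_contains_ball by blast
    define f where "f w = ennreal (\<bar>\<psi> w - \<psi> z\<bar> / cmod (w - z))" for w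
    define A where "A e = (SUP w\<in>ball z e - {z}. f w)" for e
    define B where "B n = (SUP d\<in>D. T n d z)" for n
    have g: "grad_norm \<psi> z = (INF e\<in>{0<..}. A e)"
      unfolding grad_norm_def Limsup_at A_def f_def ..
    have Amono: "A e \<le> A e'" if "e \<le> e'" for e e'
      unfolding A_def by (rule SUP_subset_mono) (use that in auto)
    have Bmono: "B m \<le> B n" if "n \<le> m" for n m
      unfolding B_def
    proof (rule SUP_mono)
      fix d assume "d \<in> D"
      have "1 / real (Suc m) \<le> 1 / real (Suc n)" using that by (simp add: frac_le)
      then have "T m d z \<le> T n d z" unfolding T_def by (auto simp: dist_commute)
      then show "\<exists>d'\<in>D. T m d z \<le> T n d' z" using \<open>d \<in> D\<close> by blast
    qed
    have AB: "A (1 / real (Suc n)) = B n" if n: "1 / real (Suc n) \<le> e0" for n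
    proof (rule antisym)
      let ?e = "1 / real (Suc n)"
      have sub: "ball z ?e \<subseteq> S" using e0 n by auto
      have cf: "continuous_on (ball z ?e - {z}) f"
      proof -
        have c1: "continuous_on (ball z ?e - {z}) \<psi>"
          by (rule continuous_on_subset[OF c]) (use sub in auto)
        have "continuous_on (ball z ?e - {z}) (\<lambda>w. \<bar>\<psi> w - \<psi> z\<bar> / cmod (w - z))"
          by (intro continuous_intros c1) auto
        then show ?thesis unfolding f_def by (rule continuous_on_ennreal)
      qed
      show "A ?e \<le> B n"
        unfolding A_def
      proof (rule SUP_least)
        fix w assume w: "w \<in> ball z ?e - {z}"
        show "f w \<le> B n"
        proof (rule dense_le)
          fix y assume y: "y < f w"
          define U where "U = (ball z ?e - {z}) \<inter> f -` {y<..}"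
          have "open U"
          proof -
            have "open (ball z ?e - {z})" by (intro open_Diff) auto
            then have "open (f -` {y<..} \<inter> (ball z ?e - {z}))"
              using cf by (subst (asm) continuous_on_open_vimage) auto
            then show ?thesis by (simp add: U_def Int_commute)
          qed
          moreover have "w \<in> U" using w y by (auto simp: U_def)
          ultimately obtain d where d: "d \<in> D" "d \<in> U" using D(2) by blast
          have dS: "d \<in> S" using d sub by (auto simp: U_def)
          have "T n d z = f d"
            using d dS zS by (auto simp: T_def f_def U_def \<psi>'_def dist_commute)
          then have "y < T n d z" using d by (auto simp: U_def)
          also have "T n d z \<le> B n" unfolding B_def using d by (intro SUP_upper) auto
          finally show "y \<le> B n" by simp
        qed
      qed
      show "B n \<le> A ?e"
        unfolding B_def
      proof (rule SUP_least)
        fix d assume "d \<in> D"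
        show "T n d z \<le> A ?e"
        proof (cases "d \<in> ball z ?e \<and> d \<noteq> z")
          case True
          then have "T n d z = f d"
            using sub zS by (auto simp: T_def f_def \<psi>'_def)
          also have "\<dots> \<le> A ?e" unfolding A_def by (rule SUP_upper) (use True in auto)
          finally show ?thesis .
        qed (auto simp: T_def)
      qed
    qed
    obtain N where N: "inverse (real (Suc N)) < e0" using reals_Archimedean e0 by blast
    have Nle: "1 / real (Suc m) \<le> e0" if "N \<le> m" for m
    proof -
      have "1 / real (Suc m) \<le> 1 / real (Suc N)" using that by (simp add: frac_le)
      then show ?thesis using N by (simp add: inverse_eq_divide)
    qed
    show ?thesis
    proof (rule antisym)
      show "grad_norm \<psi> z \<le> H z"
        unfolding H_def B_def[symmetric]
      proof (rule INF_greatest)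
        fix n
        let ?m = "max n N"
        have "grad_norm \<psi> z \<le> A (1 / real (Suc ?m))"
          unfolding g by (rule INF_lower) auto
        also have "\<dots> = B ?m" using Nle[of ?m] by (intro AB) auto
        also have "\<dots> \<le> B n" by (rule Bmono) auto
        finally show "grad_norm \<psi> z \<le> B n" .
      qed
      show "H z \<le> grad_norm \<psi> z"
        unfolding g
      proof (rule INF_greatest)
        fix e :: real assume "e \<in> {0<..}"
        then obtain n where n: "inverse (real (Suc n)) < min e e0"
          using reals_Archimedean e0 by (metis greaterThan_iff min_less_iff_conj)
        have "H z \<le> B n" unfolding H_def B_def by (rule INF_lower) auto
        also have "\<dots> = A (1 / real (Suc n))"
          using n by (intro AB[symmetric]) (simp add: inverse_eq_divide)
        also have "\<dots> \<le> A e" using n by (intro Amono) (simp add: inverse_eq_divide)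
        finally show "H z \<le> A e" .
      qed
    qed
  qed
  ultimately show ?thesis using that by blast
qed

lemma ennreal_powr_mono:
  assumes "0 \<le> p" "x \<le> y"
  shows "ennreal_powr x p \<le> ennreal_powr y p"
proof (cases "y = top")
  case True then show ?thesis by (simp add: ennreal_powr_def)
next
  case False
  then have "x \<noteq> top" using assms top_unique by auto
  moreover have "enn2real x \<le> enn2real y" using assms False by (simp add: enn2real_mono top.not_eq_extremum)
  ultimately show ?thesis using False assms
    by (simp add: ennreal_powr_def powr_mono2)
qed

lemma ennreal_powr_leftcont:
  assumes p: "0 < p" and y: "y < ennreal_powr X p"
  shows "\<exists>z<X. y < ennreal_powr z p"
proof (cases "X = top")
  case True
  from y have "y \<noteq> top" by auto
  then obtain y0 where y0: "y = ennreal y0" "0 \<le> y0" by (cases y) auto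
  define t where "t = (y0 + 1) powr (1/p)"
  have "t powr p = y0 + 1" using p y0 by (simp add: t_def powr_powr)
  then have "y < ennreal_powr (ennreal t) p"
    using y0 p by (simp add: ennreal_powr_def t_def ennreal_less_iff)
  moreover have "ennreal t < X" using True by simp
  ultimately show ?thesis by blast
next
  case False
  then obtain x where x: "X = ennreal x" "0 \<le> x" by (cases X) auto
  from y have "y \<noteq> top" by auto
  then obtain y0 where y0: "y = ennreal y0" "0 \<le> y0" by (cases y) auto
  have lt: "y0 < x powr p" using y x y0 by (simp add: ennreal_powr_def ennreal_less_iff)
  define m where "m = (y0 + x powr p) / 2"
  define t where "t = m powr (1/p)"
  have m: "y0 < m" "m < x powr p" "0 < m" using lt y0 by (auto simp: m_def)
  have "t powr p = m" using p m by (simp add: t_def powr_powr)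
  have "t < (x powr p) powr (1/p)" unfolding t_def
    using m p by (intro powr_less_mono2) auto
  also have "\<dots> = x" using p x by (simp add: powr_powr)
  finally have tx: "t < x" .
  have t0: "0 \<le> t" by (simp add: t_def)
  have "y < ennreal_powr (ennreal t) p"
    using y0 t0 \<open>t powr p = m\<close> m by (simp add: ennreal_powr_def ennreal_less_iff)
  moreover have "ennreal t < X" using tx t0 x by (simp add: ennreal_less_iff)
  ultimately show ?thesis by blast
qed

definition IA :: "real \<Rightarrow> real \<Rightarrow> (complex \<Rightarrow> complex) \<Rightarrow> complex \<Rightarrow> ennreal" where
  "IA \<alpha> q g a = (\<integral>\<^sup>+ z. ennreal (1 / pi) * indicator (ball 0 1) z
          * ennreal ((1 - (cmod (disc_auto a z))\<^sup>2) powr (\<alpha> + 2))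
          * (grad_norm (\<lambda>w. cmod (g w) powr q) z)\<^sup>2 \<partial>lborel)"

lemma N_pow_IA: "N_pow \<alpha> q g = (SUP a\<in>ball 0 1. IA \<alpha> q g a)"
  by (simp add: N_pow_def IA_def)

definition Wt :: "real \<Rightarrow> complex \<Rightarrow> complex \<Rightarrow> real" where
  "Wt \<alpha> a z = (1 - (cmod (disc_auto a z))\<^sup>2) powr (\<alpha> + 2)"

lemma Wt_measurable[measurable]: "Wt \<alpha> a \<in> borel_measurable borel"
  unfolding Wt_def[abs_def] disc_auto_def by measurable

lemma norm_scale_lt1:
  assumes "0 < r" "r \<le> 1" "cmod z < 1"
  shows "cmod (of_real r * z) < 1"
proof -
  have "cmod (of_real r * z) = r * cmod z" using assms by (simp add: norm_mult)
  also have "\<dots> \<le> cmod z" using assms by (intro mult_left_le_one_le) auto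
  finally show ?thesis using assms by linarith
qed

lemma norm_cnj_mult_lt1:
  assumes "cmod a < 1" "cmod w < 1"
  shows "cmod (cnj a * w) < 1"
proof -
  have "cmod (cnj a * w) = cmod a * cmod w" by (simp add: norm_mult)
  also have "\<dots> \<le> cmod w" using assms by (intro mult_left_le_one_le) auto
  finally show ?thesis using assms by linarith
qed

lemma div_ge_self:
  fixes x t :: real
  assumes "0 < t" "t < 1" "0 \<le> x"
  shows "x \<le> x / t"
proof -
  have "x * t \<le> x" using assms by (intro mult_right_le_one_le) auto
  then show ?thesis using assms by (simp add: le_divide_eq)
qed

lemma key:
  fixes g :: "complex \<Rightarrow> complex"
  assumes hol: "g holomorphic_on ball 0 1" and q: "q > 0"
  obtains \<Phi> :: "real \<Rightarrow> complex \<Rightarrow> complex \<Rightarrow> ennreal" where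
    "\<And>r a. \<Phi> r a \<in> borel_measurable borel"
    "\<And>r a. 0 < r \<Longrightarrow> r \<le> 1 \<Longrightarrow> IA \<alpha> q (\<lambda>z. g (of_real r * z)) a = (\<integral>\<^sup>+w. \<Phi> r a w \<partial>lborel)"
    "\<And>a. IA \<alpha> q g a = (\<integral>\<^sup>+w. \<Phi> 1 a w \<partial>lborel)"
    "\<And>r a w. 0 < r \<Longrightarrow> r \<le> 1 \<Longrightarrow> a \<in> ball 0 1 \<Longrightarrow> \<alpha> \<ge> -1 \<Longrightarrow> \<Phi> r a w \<le> \<Phi> 1 (of_real r * a) w"
    "\<And>a f w. a \<in> ball 0 1 \<Longrightarrow> (\<And>n. 0 < f n \<and> f n < 1) \<Longrightarrow> f \<longlonglongrightarrow> 1 \<Longrightarrow>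
        (\<lambda>n. \<Phi> (f n) a w) \<longlonglongrightarrow> \<Phi> 1 a w"
proof -
  define \<psi> where "\<psi> w = cmod (g w) powr q" for w
  have "continuous_on (ball 0 1) g" using hol by (rule holomorphic_on_imp_continuous_on)
  then have c\<psi>: "continuous_on (ball 0 1) \<psi>"
    unfolding \<psi>_def[abs_def] using q by (intro continuous_on_powr' continuous_intros) auto
  obtain H where H[measurable]: "H \<in> borel_measurable borel"
    and GH: "\<And>z. z \<in> ball 0 1 \<Longrightarrow> grad_norm \<psi> z = H z"
    using grad_norm_measurable[OF _ c\<psi>] by blast
  define \<Phi> where "\<Phi> r a w = ennreal (1/pi) * indicator (ball 0 1) (of_real (1/r) * w)
     * ennreal (Wt \<alpha> a (of_real (1/r) * w)) * (H w)\<^sup>2" for r a w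
  have m\<Phi>: "\<Phi> r a \<in> borel_measurable borel" for r a
  proof -
    have sc[measurable]: "(\<lambda>x::complex. of_real (1/r) * x) \<in> borel_measurable borel"
      by (intro borel_measurable_continuous_onI continuous_intros)
    have [measurable]: "(\<lambda>x. ennreal (Wt \<alpha> a (of_real (1/r) * x))) \<in> borel_measurable borel"
      using measurable_compose[OF sc Wt_measurable] by (simp add: o_def)
    have [measurable]: "(\<lambda>x::complex. indicator (ball 0 1) (of_real (1/r) * x) :: ennreal) \<in> borel_measurable borel"
    proof (rule borel_measurable_indicator')
      have "open {x::complex. dist 0 (of_real (1/r) * x) < 1}"
        by (intro open_Collect_less continuous_intros)
      then show "{x::complex \<in> space borel. of_real (1/r) * x \<in> ball 0 1} \<in> sets borel"
        by (simp add: borel_open)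
    qed
    show ?thesis unfolding \<Phi>_def[abs_def] by measurable
  qed
  have eq: "IA \<alpha> q (\<lambda>z. g (of_real r * z)) a = (\<integral>\<^sup>+w. \<Phi> r a w \<partial>lborel)" if r: "0 < r" "r \<le> 1" for r a
  proof -
    have "(\<integral>\<^sup>+w. \<Phi> r a w \<partial>lborel) = (\<integral>\<^sup>+z. ennreal (r^2) * \<Phi> r a (of_real r * z) \<partial>lborel)"
      by (rule nn_integral_scale_complex[OF m\<Phi> r(1)])
    also have "\<dots> = IA \<alpha> q (\<lambda>z. g (of_real r * z)) a"
      unfolding IA_def
    proof (rule nn_integral_cong)
      fix z :: complex
      have zz: "of_real (1/r) * (of_real r * z) = z" using r by simp
      have gs: "grad_norm (\<lambda>w. cmod (g (of_real r * w)) powr q) z = ennreal r * grad_norm \<psi> (of_real r * z)"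
        using grad_norm_scale[OF r(1), of \<psi> z] by (simp add: \<psi>_def)
      show "ennreal (r^2) * \<Phi> r a (of_real r * z) =
        ennreal (1 / pi) * indicator (ball 0 1) z * ennreal ((1 - (cmod (disc_auto a z))\<^sup>2) powr (\<alpha> + 2)) *
        (grad_norm (\<lambda>w. cmod (g (of_real r * w)) powr q) z)\<^sup>2"
      proof (cases "z \<in> ball 0 1")
        case True
        then have "of_real r * z \<in> ball 0 1" using norm_scale_lt1[OF r] by simp
        then have "grad_norm \<psi> (of_real r * z) = H (of_real r * z)" by (rule GH)
        note hz = this
        have p1: "\<Phi> r a (of_real r * z) = ennreal (1/pi) * ennreal (Wt \<alpha> a z) * (H (of_real r * z))\<^sup>2"
          using True zz by (simp add: \<Phi>_def)
        have p2: "(ennreal r * H (of_real r * z))\<^sup>2 = ennreal (r^2) * (H (of_real r * z))\<^sup>2"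
          using r by (simp add: power_mult_distrib ennreal_power)
        show ?thesis
        proof -
          have r0: "r \<noteq> 0" using r by simp
          show ?thesis
          unfolding p1 gs hz p2 using True r0
          by (simp add: Wt_def mult.assoc mult.left_commute)
        qed
      next
        case False
        then show ?thesis by (simp add: \<Phi>_def zz)
      qed
    qed
    finally show ?thesis ..
  qed
  have eq1: "IA \<alpha> q g a = (\<integral>\<^sup>+w. \<Phi> 1 a w \<partial>lborel)" for a
    using eq[of 1 a] by simp
  have le: "\<Phi> r a w \<le> \<Phi> 1 (of_real r * a) w"
    if r: "0 < r" "r \<le> 1" and a: "a \<in> ball 0 1" and al: "\<alpha> \<ge> -1" for r a w
  proof (cases "of_real (1/r) * w \<in> ball 0 1")
    case True
    define z where "z = of_real (1/r) * w"
    have wz: "w = of_real r * z" using r by (simp add: z_def)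
    have z1: "cmod z < 1" using True by (simp add: z_def)
    have w1: "cmod w < 1" using norm_scale_lt1[OF r z1] by (simp add: wz)
    have a1: "cmod a < 1" using a by simp
    have sp: "cmod (disc_auto (of_real r * a) (of_real r * z)) \<le> cmod (disc_auto a z)"
      using schwarz_pick_dil[OF a1 z1 r] .
    have lt1: "cmod (disc_auto a z) < 1" using disc_auto_norm_lt1[OF a1 z1] .
    have "Wt \<alpha> a z \<le> Wt \<alpha> (of_real r * a) w"
      unfolding Wt_def wz
    proof (rule powr_mono2)
      show "0 \<le> \<alpha> + 2" using al by simp
      show "0 \<le> 1 - (cmod (disc_auto a z))\<^sup>2" using lt1 by (simp add: abs_square_le_1 less_imp_le)
      show "1 - (cmod (disc_auto a z))\<^sup>2 \<le> 1 - (cmod (disc_auto (of_real r * a) (of_real r * z)))\<^sup>2"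
        using sp by (simp add: power_mono)
    qed
    then have "ennreal (Wt \<alpha> a z) \<le> ennreal (Wt \<alpha> (of_real r * a) w)" by (rule ennreal_leI)
    note WW = this
    have zb: "z \<in> ball 0 1" using z1 by simp
    have L: "\<Phi> r a w = ennreal (1/pi) * ennreal (Wt \<alpha> a z) * (H w)\<^sup>2"
      unfolding \<Phi>_def z_def[symmetric] using zb by simp
    have R: "\<Phi> 1 (of_real r * a) w = ennreal (1/pi) * ennreal (Wt \<alpha> (of_real r * a) w) * (H w)\<^sup>2"
      using w1 by (simp add: \<Phi>_def)
    show ?thesis unfolding L R using WW by (intro mult_right_mono mult_left_mono) auto
  next
    case False
    then show ?thesis by (simp add: \<Phi>_def)
  qed
  have lim: "(\<lambda>n. \<Phi> (f n) a w) \<longlonglongrightarrow> \<Phi> 1 a w"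
    if a: "a \<in> ball 0 1" and f: "\<And>n. 0 < f n \<and> f n < 1" and fl: "f \<longlonglongrightarrow> 1" for a f w
  proof (cases "w \<in> ball 0 1")
    case False
    have "\<Phi> (f n) a w = 0" for n
    proof -
      have "cmod (of_real (1 / f n) * w) = cmod w / f n" using f[of n] by (simp add: norm_mult norm_divide)
      also have "\<dots> \<ge> cmod w" using f[of n] by (intro div_ge_self) auto
      finally show ?thesis using False by (simp add: \<Phi>_def)
    qed
    moreover have "\<Phi> 1 a w = 0" using False by (simp add: \<Phi>_def)
    ultimately show ?thesis by simp
  next
    case True
    have w1: "cmod w < 1" using True by simp
    have a1: "cmod a < 1" using a by simp
    have ev: "eventually (\<lambda>n. cmod w < f n) sequentially"
      using order_tendstoD(1)[OF fl w1] .
    have ev2: "eventually (\<lambda>n. ennreal (1/pi) * ennreal (Wt \<alpha> a (of_real (1 / f n) * w)) * (H w)\<^sup>2 = \<Phi> (f n) a w) sequentially"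
      using ev
    proof eventually_elim
      case (elim n)
      then have "cmod (of_real (1 / f n) * w) < 1" using f[of n] by (simp add: norm_divide divide_less_eq)
      then show ?case by (simp add: \<Phi>_def)
    qed
    have "((\<lambda>n. of_real (1 / f n) * w) \<longlongrightarrow> of_real (1/1) * w) sequentially"
      by (intro tendsto_intros fl) auto
    then have t1: "((\<lambda>n. of_real (1 / f n) * w) \<longlongrightarrow> w) sequentially" by simp
    have den: "1 - cnj a * w \<noteq> 0"
    proof
      assume "1 - cnj a * w = 0"
      then have "cmod (cnj a * w) = 1" by (metis norm_one right_minus_eq)
      moreover have "cmod (cnj a * w) < 1" using norm_cnj_mult_lt1[OF a1 w1] .
      ultimately show False by simp
    qed
    have t2: "((\<lambda>n. disc_auto a (of_real (1 / f n) * w)) \<longlongrightarrow> disc_auto a w) sequentially"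
      unfolding disc_auto_def using den by (intro tendsto_intros t1) auto
    have lt1: "cmod (disc_auto a w) < 1" using disc_auto_norm_lt1[OF a1 w1] .
    have pos: "0 < 1 - (cmod (disc_auto a w))\<^sup>2" using lt1 by (simp add: abs_square_less_1)
    have t3: "((\<lambda>n. Wt \<alpha> a (of_real (1 / f n) * w)) \<longlongrightarrow> Wt \<alpha> a w) sequentially"
      unfolding Wt_def using pos by (intro tendsto_powr tendsto_intros t2) auto
    have Wpos: "0 < Wt \<alpha> a w" unfolding Wt_def using pos by simp
    have t4: "((\<lambda>n. ennreal (1/pi) * ennreal (Wt \<alpha> a (of_real (1 / f n) * w)) * (H w)\<^sup>2)
        \<longlongrightarrow> ennreal (1/pi) * ennreal (Wt \<alpha> a w) * (H w)\<^sup>2) sequentially"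
    proof (rule tendsto_mult_ennreal)
      show "((\<lambda>n. ennreal (1/pi) * ennreal (Wt \<alpha> a (of_real (1 / f n) * w))) \<longlongrightarrow> ennreal (1/pi) * ennreal (Wt \<alpha> a w)) sequentially"
        by (intro ennreal_tendsto_cmult tendsto_ennrealI t3) auto
      show "\<not> ((ennreal (1/pi) * ennreal (Wt \<alpha> a w) = 0 \<and> (H w)\<^sup>2 = \<infinity>) \<or>
          (ennreal (1/pi) * ennreal (Wt \<alpha> a w) = \<infinity> \<and> (H w)\<^sup>2 = 0))"
        using Wpos by (simp add: ennreal_mult_eq_top_iff)
    qed simp
    have "\<Phi> 1 a w = ennreal (1/pi) * ennreal (Wt \<alpha> a w) * (H w)\<^sup>2"
      using True by (simp add: \<Phi>_def)
    then show ?thesis using Lim_transform_eventually[OF t4 ev2] by simp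
  qed
  show ?thesis
    by (rule that[OF m\<Phi> eq eq1 le lim]) auto
qed

theorem proposition2p9:
  fixes \<alpha> :: real
  assumes "\<alpha> \<ge> -1"
  shows "(\<forall>g q. g holomorphic_on ball 0 1 \<and> q > 0 \<longrightarrow>
            N_norm \<alpha> q g \<le> Liminf (at_left 1) (\<lambda>r. N_norm \<alpha> q (\<lambda>z. g (complex_of_real r * z))))
       \<and> (\<forall>q::real. q \<ge> 1 \<longrightarrow> (\<exists>C::real. C > 0 \<and>
            (\<forall>g. g holomorphic_on ball 0 1 \<longrightarrow>
               (SUP r\<in>{0<..<1}. N_norm \<alpha> q (\<lambda>z. g (complex_of_real r * z))) \<le> ennreal C * N_norm \<alpha> q g)))"
proof (intro conjI allI impI)
  fix g :: "complex \<Rightarrow> complex" and q :: real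
  assume gq: "g holomorphic_on ball 0 1 \<and> q > 0"
  then have hol: "g holomorphic_on ball 0 1" and q: "q > 0" by auto
  obtain \<Phi> :: "real \<Rightarrow> complex \<Rightarrow> complex \<Rightarrow> ennreal" where P1: "\<And>r a. \<Phi> r a \<in> borel_measurable borel"
    and P2: "\<And>r a. 0 < r \<Longrightarrow> r \<le> 1 \<Longrightarrow> IA \<alpha> q (\<lambda>z. g (of_real r * z)) a = (\<integral>\<^sup>+w. \<Phi> r a w \<partial>lborel)"
    and P3: "\<And>a. IA \<alpha> q g a = (\<integral>\<^sup>+w. \<Phi> 1 a w \<partial>lborel)"
    and P4: "\<And>r a w. 0 < r \<Longrightarrow> r \<le> 1 \<Longrightarrow> a \<in> ball 0 1 \<Longrightarrow> \<alpha> \<ge> -1 \<Longrightarrow> \<Phi> r a w \<le> \<Phi> 1 (of_real r * a) w"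
    and P5: "\<And>a f w. a \<in> ball 0 1 \<Longrightarrow> (\<And>n. 0 < f n \<and> f n < 1) \<Longrightarrow> f \<longlonglongrightarrow> 1 \<Longrightarrow>
        (\<lambda>n. \<Phi> (f n) a w) \<longlonglongrightarrow> \<Phi> 1 a w"
    using key[OF hol q, where \<alpha>=\<alpha>] by blast
  have p: "0 < 1 / (2 * q)" using q by simp
  show "N_norm \<alpha> q g \<le> Liminf (at_left 1) (\<lambda>r. N_norm \<alpha> q (\<lambda>z. g (complex_of_real r * z)))"
  proof (rule le_Liminf_iff[THEN iffD2], intro allI impI)
    fix y assume y: "y < N_norm \<alpha> q g"
    then obtain z where z: "z < N_pow \<alpha> q g" "y < ennreal_powr z (1/(2*q))"
      using ennreal_powr_leftcont[OF p] unfolding N_norm_def by blast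
    then obtain a where a: "a \<in> ball 0 1" "z < IA \<alpha> q g a"
      unfolding N_pow_IA by (auto simp: less_SUP_iff)
    show "eventually (\<lambda>r. y < N_norm \<alpha> q (\<lambda>z. g (complex_of_real r * z))) (at_left 1)"
    proof (rule sequentially_imp_eventually_at_left[where b=0])
      show "(0::real) < 1" by simp
      fix f :: "nat \<Rightarrow> real" assume f0: "\<And>n. 0 < f n" and f1: "\<And>n. f n < 1" and "incseq f"
        and fl: "f \<longlonglongrightarrow> 1"
      have li: "liminf (\<lambda>n. \<Phi> (f n) a w) = \<Phi> 1 a w" for w
        by (rule lim_imp_Liminf) (use P5[OF a(1) _ fl] f0 f1 in auto)
      have "(\<integral>\<^sup>+w. liminf (\<lambda>n. \<Phi> (f n) a w) \<partial>lborel) \<le> liminf (\<lambda>n. \<integral>\<^sup>+w. \<Phi> (f n) a w \<partial>lborel)"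
        by (rule nn_integral_liminf) (use P1 in simp)
      then have "IA \<alpha> q g a \<le> liminf (\<lambda>n. \<integral>\<^sup>+w. \<Phi> (f n) a w \<partial>lborel)"
        unfolding li P3 .
      then have "z < liminf (\<lambda>n. \<integral>\<^sup>+w. \<Phi> (f n) a w \<partial>lborel)" using a(2) by simp
      then have "eventually (\<lambda>n. z < \<integral>\<^sup>+w. \<Phi> (f n) a w \<partial>lborel) sequentially"
        by (rule less_LiminfD)
      then show "eventually (\<lambda>n. y < N_norm \<alpha> q (\<lambda>z. g (complex_of_real (f n) * z))) sequentially"
      proof eventually_elim
        case (elim n)
        have "\<integral>\<^sup>+w. \<Phi> (f n) a w \<partial>lborel = IA \<alpha> q (\<lambda>z. g (of_real (f n) * z)) a"
          using P2[of "f n" a] f0[of n] f1[of n] by simp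
        also have "\<dots> \<le> N_pow \<alpha> q (\<lambda>z. g (of_real (f n) * z))"
          unfolding N_pow_IA using a(1) by (rule SUP_upper)
        finally have "z \<le> N_pow \<alpha> q (\<lambda>z. g (of_real (f n) * z))" using elim by simp
        then have "ennreal_powr z (1/(2*q)) \<le> N_norm \<alpha> q (\<lambda>z. g (of_real (f n) * z))"
          unfolding N_norm_def using p by (intro ennreal_powr_mono) auto
        then show ?case using z(2) by simp
      qed
    qed
  qed
next
  fix q :: real assume q1: "q \<ge> 1"
  then have q: "q > 0" by simp
  show "\<exists>C::real. C > 0 \<and> (\<forall>g. g holomorphic_on ball 0 1 \<longrightarrow>
          (SUP r\<in>{0<..<1}. N_norm \<alpha> q (\<lambda>z. g (complex_of_real r * z))) \<le> ennreal C * N_norm \<alpha> q g)"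
  proof (intro exI[of _ 1] conjI allI impI)
    fix g :: "complex \<Rightarrow> complex" assume hol: "g holomorphic_on ball 0 1"
    obtain \<Phi> :: "real \<Rightarrow> complex \<Rightarrow> complex \<Rightarrow> ennreal" where P1: "\<And>r a. \<Phi> r a \<in> borel_measurable borel"
      and P2: "\<And>r a. 0 < r \<Longrightarrow> r \<le> 1 \<Longrightarrow> IA \<alpha> q (\<lambda>z. g (of_real r * z)) a = (\<integral>\<^sup>+w. \<Phi> r a w \<partial>lborel)"
      and P3: "\<And>a. IA \<alpha> q g a = (\<integral>\<^sup>+w. \<Phi> 1 a w \<partial>lborel)"
      and P4: "\<And>r a w. 0 < r \<Longrightarrow> r \<le> 1 \<Longrightarrow> a \<in> ball 0 1 \<Longrightarrow> \<alpha> \<ge> -1 \<Longrightarrow> \<Phi> r a w \<le> \<Phi> 1 (of_real r * a) w"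
      and P5: "\<And>a f w. a \<in> ball 0 1 \<Longrightarrow> (\<And>n. 0 < f n \<and> f n < 1) \<Longrightarrow> f \<longlonglongrightarrow> 1 \<Longrightarrow>
        (\<lambda>n. \<Phi> (f n) a w) \<longlonglongrightarrow> \<Phi> 1 a w"
      using key[OF hol q, where \<alpha>=\<alpha>] by blast
    have p: "0 \<le> 1 / (2 * q)" using q by simp
    show "(SUP r\<in>{0<..<1}. N_norm \<alpha> q (\<lambda>z. g (complex_of_real r * z))) \<le> ennreal 1 * N_norm \<alpha> q g"
    proof (simp only: ennreal_1 mult_1, rule SUP_least)
      fix r :: real assume r: "r \<in> {0<..<1}"
      then have r0: "0 < r" and r1: "r \<le> 1" by auto
      have "N_pow \<alpha> q (\<lambda>z. g (complex_of_real r * z)) \<le> N_pow \<alpha> q g"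
        unfolding N_pow_IA
      proof (rule SUP_least)
        fix a :: complex assume a: "a \<in> ball 0 1"
        have ra: "of_real r * a \<in> ball 0 1" using norm_scale_lt1[OF r0 r1] a by simp
        have "IA \<alpha> q (\<lambda>z. g (of_real r * z)) a = (\<integral>\<^sup>+w. \<Phi> r a w \<partial>lborel)" by (rule P2[OF r0 r1])
        also have "\<dots> \<le> (\<integral>\<^sup>+w. \<Phi> 1 (of_real r * a) w \<partial>lborel)"
          by (rule nn_integral_mono) (rule P4[OF r0 r1 a assms])
        also have "\<dots> = IA \<alpha> q g (of_real r * a)" by (rule P3[symmetric])
        also have "\<dots> \<le> (SUP a\<in>ball 0 1. IA \<alpha> q g a)" using ra by (rule SUP_upper)
        finally show "IA \<alpha> q (\<lambda>z. g (of_real r * z)) a \<le> (SUP a\<in>ball 0 1. IA \<alpha> q g a)" .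
      qed
      then show "N_norm \<alpha> q (\<lambda>z. g (complex_of_real r * z)) \<le> N_norm \<alpha> q g"
        unfolding N_norm_def using p by (rule ennreal_powr_mono[rotated])
    qed
  qed simp
qed

end
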